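(* There exists a CPwL map $F:\mathbb{R}^2\to\mathbb{R}^2$ such that \[ F(E(t))=E(r(t))\qquad\text{for all } t\in[0,1]. \] Moreover, $F$ admits an exact finite ReLU network realization (of some fixed width and depth).
   Context: $r:[0,1]\to[0,1]$ is defined by $r(t)=2t-\lfloor 2t\rfloor$ for $t\in[0,1)$ and $r(1)=1$. Let $\Gamma$ be the boundary of the triangle with vertices $a_0=(0,0)$, $a_1=(1,1)$, $a_2=(1,0)$, parametrized by $E:[0,1]\to\Gamma$, \[ E(t)=\begin{cases}(3t,3t),&0\le t\le\tfrac13,\\(1,2-3t),&\tfrac13\le t\le\tfrac23,\\(3-3t,0),&\tfrac23\le t\le1.\end{cases} \] CPwL means continuous piecewise linear (continuous, and affine on the cells of a finite polygonal subdivision of every compact set). *)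

theory Defs
  imports "HOL-Analysis.Analysis"
begin

definition r_map :: "real \<Rightarrow> real" where
  "r_map t = (if t = 1 then 1 else 2 * t - of_int \<lfloor>2 * t\<rfloor>)"

definition E_param :: "real \<Rightarrow> real \<times> real" where
  "E_param t = (if t \<le> 1/3 then (3*t, 3*t)
                else if t \<le> 2/3 then (1, 2 - 3*t)
                else (3 - 3*t, 0))"

definition affine_on :: "(real \<times> real \<Rightarrow> real \<times> real) \<Rightarrow> (real \<times> real) set \<Rightarrow> bool" where
  "affine_on F P \<longleftrightarrow> (\<exists>A b. linear A \<and> (\<forall>x\<in>P. F x = A x + b))"

definition CPwL :: "(real \<times> real \<Rightarrow> real \<times> real) \<Rightarrow> bool" where
  "CPwL F \<longleftrightarrow> continuous_on UNIV F \<and>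
     (\<forall>K. compact K \<longrightarrow> (\<exists>\<C>. finite \<C> \<and> K \<subseteq> \<Union>\<C> \<and>
        (\<forall>P\<in>\<C>. polytope P \<and> affine_on F P)))"

text \<open>ReLU networks: a list of layers (W, b), with W a list of rows.\<close>
definition relu :: "real \<Rightarrow> real" where
  "relu x = max 0 x"

definition layer_affine :: "real list list \<times> real list \<Rightarrow> real list \<Rightarrow> real list" where
  "layer_affine L x = map2 (\<lambda>row bi. sum_list (map2 (*) row x) + bi) (fst L) (snd L)"

fun net_eval :: "(real list list \<times> real list) list \<Rightarrow> real list \<Rightarrow> real list" where
  "net_eval [] x = x"
| "net_eval [L] x = layer_affine L x"
| "net_eval (L # Ls) x = net_eval Ls (map relu (layer_affine L x))"

fun valid_net :: "nat \<Rightarrow> nat \<Rightarrow> (real list list \<times> real list) list \<Rightarrow> bool" where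
  "valid_net n m [] \<longleftrightarrow> n = m"
| "valid_net n m (L # Ls) \<longleftrightarrow>
     length (fst L) = length (snd L) \<and> (\<forall>row\<in>set (fst L). length row = n) \<and>
     valid_net (length (snd L)) m Ls"

definition relu_realizes :: "(real list list \<times> real list) list \<Rightarrow> (real \<times> real \<Rightarrow> real \<times> real) \<Rightarrow> bool" where
  "relu_realizes N F \<longleftrightarrow> valid_net 2 2 N \<and>
     (\<forall>x y. net_eval N [x, y] = [fst (F (x, y)), snd (F (x, y))])"

end

theory Submission
  imports Defs
begin

definition FF :: "real \<times> real \<Rightarrow> real \<times> real" where
  "FF p = (2 * fst p - 2 * snd p - relu (2 * fst p - 1) + relu (4 * snd p - 2 * fst p),
           2 * snd p + relu (2 * fst p - 2 * snd p - 1) - relu (2 * fst p + 2 * snd p - 2))"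

definition HS :: "bool \<Rightarrow> real \<times> real \<Rightarrow> real \<Rightarrow> (real \<times> real) set" where
  "HS s a c = (if s then {p. a \<bullet> p \<ge> c} else {p. a \<bullet> p \<le> c})"

lemma polyhedron_HS: "polyhedron (HS s a c)"
  by (simp add: HS_def polyhedron_halfspace_ge polyhedron_halfspace_le)

definition cell :: "real \<Rightarrow> bool \<times> bool \<times> bool \<times> bool \<Rightarrow> (real \<times> real) set" where
  "cell M q = (case q of (a, b, c, d) \<Rightarrow>
     cbox (-(M,M)) (M,M) \<inter> HS a (2,0) 1 \<inter> HS b (-2,4) 0 \<inter> HS c (2,-2) 1 \<inter> HS d (2,2) 2)"

lemma polytope_cell: "polytope (cell M q)"
  unfolding polytope_eq_bounded_polyhedron cell_def
  by (auto split: prod.splits intro!: polyhedron_Int polyhedron_HS bounded_Int)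

lemma relu_pos: "x \<ge> 0 \<Longrightarrow> relu x = x" and relu_neg: "x \<le> 0 \<Longrightarrow> relu x = 0"
  by (auto simp: relu_def)

lemma affine_cell: "affine_on FF (cell M q)"
proof -
  obtain a b c d where q: "q = (a, b, c, d)" by (cases q) auto
  define A where "A = (\<lambda>p::real\<times>real. (2 * fst p - 2 * snd p - (if a then 2 * fst p else 0)
        + (if b then 4 * snd p - 2 * fst p else 0),
        2 * snd p + (if c then 2 * fst p - 2 * snd p else 0) - (if d then 2 * fst p + 2 * snd p else 0)))"
  define bb where "bb = ((if a then 1 else 0) :: real, (if c then -1 else 0) + (if d then 2 else 0) :: real)"
  have "linear A"
    unfolding A_def by (rule linearI) (auto simp: algebra_simps)
  moreover have "\<forall>x\<in>cell M q. FF x = A x + bb"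
  proof
    fix x assume "x \<in> cell M q"
    then show "FF x = A x + bb"
      unfolding FF_def A_def bb_def cell_def HS_def q
      by (cases x) (auto simp: relu_def split: if_splits)
  qed
  ultimately show ?thesis unfolding affine_on_def by blast
qed

lemma cover: "cbox (-(M,M)) (M,M) \<subseteq> (\<Union>q. cell M q)"
proof
  fix x assume x: "x \<in> cbox (-(M,M)) (M,M)"
  let ?q = "((2::real,0::real) \<bullet> x \<ge> 1, (-2::real,4::real) \<bullet> x \<ge> 0, (2::real,-2::real) \<bullet> x \<ge> 1, (2::real,2::real) \<bullet> x \<ge> 2)"
  have "x \<in> cell M ?q" using x unfolding cell_def HS_def by auto
  then show "x \<in> (\<Union>q. cell M q)" by blast
qed

lemma CPwL_FF: "CPwL FF"
  unfolding CPwL_def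
proof (intro conjI allI impI)
  show "continuous_on UNIV FF"
    unfolding FF_def relu_def by (intro continuous_intros)
next
  fix K :: "(real \<times> real) set" assume "compact K"
  then have "bounded K" by (rule compact_imp_bounded)
  then obtain M where M: "\<And>x. x \<in> K \<Longrightarrow> norm x \<le> M" by (auto simp: bounded_iff)
  have "K \<subseteq> cbox (-(M,M)) (M,M)"
  proof
    fix x assume "x \<in> K"
    then have n: "norm x \<le> M" by (rule M)
    have "\<bar>fst x\<bar> \<le> norm x" using norm_fst_le[of "fst x" "snd x"] by simp
    moreover have "\<bar>snd x\<bar> \<le> norm x" using norm_snd_le[of "snd x" "fst x"] by simp
    ultimately
    show "x \<in> cbox (-(M,M)) (M,M)" using n
      by (cases x) (auto simp: cbox_Pair_iff)
  qed
  then have "K \<subseteq> \<Union>(range (cell M))" using cover by blast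
  then show "\<exists>\<C>. finite \<C> \<and> K \<subseteq> \<Union>\<C> \<and> (\<forall>P\<in>\<C>. polytope P \<and> affine_on FF P)"
    by (intro exI[of _ "range (cell M)"]) (auto simp: polytope_cell affine_cell)
qed

lemma FF_E: "t \<in> {0..1} \<Longrightarrow> FF (E_param t) = E_param (r_map t)"
proof -
  assume t: "t \<in> {0..1}"
  consider "t = 1" | "t < 1/2" | "1/2 \<le> t" "t < 1" using t by fastforce
  then show ?thesis
  proof cases
    case 1 then show ?thesis by (simp add: FF_def E_param_def r_map_def relu_def)
  next
    case 2
    then have "\<lfloor>2 * t\<rfloor> = 0" using t by (simp add: floor_eq_iff)
    then show ?thesis using 2 t by (simp add: FF_def E_param_def r_map_def relu_def)
  next
    case 3
    then have "\<lfloor>2 * t\<rfloor> = 1" using t by (simp add: floor_eq_iff)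
    then show ?thesis using 3 t by (simp add: FF_def E_param_def r_map_def relu_def)
  qed
qed

definition NN :: "(real list list \<times> real list) list" where
  "NN = [([[1,0],[-1,0],[0,1],[0,-1],[2,0],[-2,4],[2,-2],[2,2]], [0,0,0,0,-1,0,-1,-2]),
         ([[2,-2,-2,2,-1,1,0,0],[0,0,2,-2,0,0,1,-1]], [0,0])]"

lemma NN_realizes: "relu_realizes NN FF"
  unfolding relu_realizes_def
proof (intro conjI allI)
  show "valid_net 2 2 NN" by (simp add: NN_def)
next
  fix x y :: real
  show "net_eval NN [x, y] = [fst (FF (x, y)), snd (FF (x, y))]"
    by (simp add: NN_def layer_affine_def FF_def relu_def) (auto simp: max_def)
qed

theorem mainTheorem4:
  shows "\<exists>F. CPwL F \<and> (\<forall>t\<in>{0..1}. F (E_param t) = E_param (r_map t)) \<and>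
             (\<exists>N. relu_realizes N F)"
  using CPwL_FF FF_E NN_realizes by blast

end
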